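(* Let $I$ be a square-free monomial ideal of $S=K[x_1,\ldots,x_n]$ with minimal generating set $G(I)=\bigcup_{i=1}^kG_{d_i}$, where $G_{d_i}$ consists of the generators of degree $d_i$. Then $I$ is an $f$-ideal if and only if: (1) for each positive $l\in\{d_1,\ldots,d_k\}$, $$|G_l|=\tfrac12\Big(C_n^l-\Big|\bigcup_{d_i>l}\sqcap^{d_i-l}(G_{d_i})\Big|-\Big|\bigcup_{d_i<l}\sqcup^{l-d_i}(G_{d_i})\Big|\Big);$$ and (2) for each positive integer $l\notin\{d_1,\ldots,d_k\}$, $$\bigcup_{d_i>l}\sqcap^{d_i-l}(G_{d_i})=sm(S)_l\setminus\bigcup_{d_i<l}\sqcup^{l-d_i}(G_{d_i}).$$
   Context: $K$ is a field; $C_n^l$ is the binomial coefficient; $sm(S)_l$ is the set of square-free monomials of degree $l$. For a set $A$ of square-free monomials, $\sqcup(A)=\{gx_i\mid g\in A,\ x_i\nmid g,\ 1\le i\le n\}$ and $\sqcap(A)=\{h\ne1\mid h=g/x_i \text{ for some } g\in A,\ x_i\mid g\}$; $\sqcup^m$ and $\sqcap^m$ denote $m$-fold iterates. With $\sigma$ the bijection $x_{i_1}\cdots x_{i_k}\mapsto\{i_1,\ldots,i_k\}$, the facet complex $\delta_{\mathcal{F}}(I)$ has facets $\sigma(g)$, $g\in G(I)$, the Stanley–Reisner complex is $\delta_{\mathcal{N}}(I)=\{\sigma(g)\mid g\text{ square-free monomial},\ g\notin I\}$, and $I$ is an $f$-ideal if both complexes have the same $f$-vector. *)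

theory Defs
  imports Complex_Main
begin

text \<open>Square-free monomials of K[x_1,...,x_n] are identified (via the bijection sigma)
with subsets of {1..n}; divisibility becomes inclusion, degree becomes cardinality.
A square-free monomial ideal I is given by its minimal generating set G(I).\<close>

definition sqfree_min_gens :: "nat \<Rightarrow> nat set set \<Rightarrow> bool" where
  "sqfree_min_gens n G \<longleftrightarrow> G \<subseteq> Pow {1..n} \<and> (\<forall>g\<in>G. \<forall>h\<in>G. g \<subseteq> h \<longrightarrow> g = h)"

definition Gdeg :: "nat set set \<Rightarrow> nat \<Rightarrow> nat set set" where
  "Gdeg G l = {g \<in> G. card g = l}"

definition sm :: "nat \<Rightarrow> nat \<Rightarrow> nat set set" where
  "sm n l = {F. F \<subseteq> {1..n} \<and> card F = l}"

definition sqcup :: "nat \<Rightarrow> nat set set \<Rightarrow> nat set set" where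
  "sqcup n A = {insert i g | g i. g \<in> A \<and> i \<in> {1..n} \<and> i \<notin> g}"

definition sqcap :: "nat set set \<Rightarrow> nat set set" where
  "sqcap A = {g - {i} | g i. g \<in> A \<and> i \<in> g \<and> g - {i} \<noteq> {}}"

definition facet_complex :: "nat set set \<Rightarrow> nat set set" where
  "facet_complex G = {F. \<exists>g\<in>G. F \<subseteq> g}"

definition sr_complex :: "nat \<Rightarrow> nat set set \<Rightarrow> nat set set" where
  "sr_complex n G = {F. F \<subseteq> {1..n} \<and> \<not> (\<exists>g\<in>G. g \<subseteq> F)}"

text \<open>f-vector: f_i = number of faces of dimension i (cardinality i+1), i >= 0.\<close>
definition fvec :: "nat set set \<Rightarrow> nat \<Rightarrow> nat" where
  "fvec \<Delta> i = card {F \<in> \<Delta>. card F = i + 1}"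

definition f_ideal :: "nat \<Rightarrow> nat set set \<Rightarrow> bool" where
  "f_ideal n G \<longleftrightarrow> fvec (facet_complex G) = fvec (sr_complex n G)"

end

theory Submission
  imports Defs
begin

lemma cap_iter:
  assumes A: "\<forall>g\<in>A. finite g \<and> card g = d" and "k < d"
  shows "(sqcap ^^ k) A = {F. \<exists>g\<in>A. F \<subseteq> g \<and> card F = d - k}"
  using assms(2)
proof (induction k)
  case 0
  show ?case
  proof (rule set_eqI, rule iffI)
    fix F assume "F \<in> (sqcap ^^ 0) A" then show "F \<in> {F. \<exists>g\<in>A. F \<subseteq> g \<and> card F = d - 0}"
      using A by auto
  next
    fix F assume "F \<in> {F. \<exists>g\<in>A. F \<subseteq> g \<and> card F = d - 0}"
    then obtain g where "g \<in> A" "F \<subseteq> g" "card F = d" by auto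
    then have "F = g" using A by (metis card_subset_eq)
    then show "F \<in> (sqcap ^^ 0) A" using \<open>g \<in> A\<close> by simp
  qed
next
  case (Suc k)
  have IH: "(sqcap^^k) A = {F. \<exists>g\<in>A. F \<subseteq> g \<and> card F = d - k}" using Suc by auto
  show ?case
  proof (rule set_eqI, rule iffI)
    fix F assume "F \<in> (sqcap ^^ Suc k) A"
    then obtain H i where H: "H \<in> (sqcap^^k) A" "i \<in> H" "F = H - {i}"
      by (auto simp: sqcap_def)
    then obtain g where g: "g\<in>A" "H\<subseteq>g" "card H = d-k" using IH by auto
    have "finite H" using g A finite_subset by blast
    then have "card F = d - Suc k" using H g by simp
    then show "F \<in> {F. \<exists>g\<in>A. F \<subseteq> g \<and> card F = d - Suc k}" using H g by auto
  next
    fix F assume "F \<in> {F. \<exists>g\<in>A. F \<subseteq> g \<and> card F = d - Suc k}"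
    then obtain g where g: "g \<in> A" "F \<subseteq> g" "card F = d - Suc k" by auto
    have fg: "finite g" "card g = d" using g A by auto
    have "F \<noteq> g" using g fg Suc.prems by auto
    then obtain i where i: "i \<in> g" "i \<notin> F" using g by blast
    have fF: "finite F" using fg g finite_subset by blast
    define H where "H = insert i F"
    have "H \<subseteq> g" "card H = d - k" using i g fF Suc.prems unfolding H_def by auto
    then have "H \<in> (sqcap^^k) A" using IH g by auto
    moreover have "F = H - {i}" using i H_def by auto
    moreover have "F \<noteq> {}" using g Suc.prems by auto
    ultimately show "F \<in> (sqcap ^^ Suc k) A" using i unfolding H_def
      by (auto simp: sqcap_def intro!: exI[of _ "insert i F"] exI[of _ i])
  qed
qed

lemma cup_iter:
  assumes A: "\<forall>g\<in>A. g \<subseteq> {1..n} \<and> card g = d"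
  shows "(sqcup n ^^ k) A = {F. F \<subseteq> {1..n} \<and> (\<exists>g\<in>A. g \<subseteq> F) \<and> card F = d + k}"
proof (induction k)
  case 0
  show ?case
  proof (rule set_eqI, rule iffI)
    fix F assume "F \<in> (sqcup n ^^ 0) A" then show "F \<in> {F. F \<subseteq> {1..n} \<and> (\<exists>g\<in>A. g \<subseteq> F) \<and> card F = d + 0}"
      using A by auto
  next
    fix F assume "F \<in> {F. F \<subseteq> {1..n} \<and> (\<exists>g\<in>A. g \<subseteq> F) \<and> card F = d + 0}"
    then obtain g where "g \<in> A" "g \<subseteq> F" "card F = d" "F \<subseteq> {1..n}" by auto
    then have "F = g" using A by (metis card_subset_eq finite_atLeastAtMost finite_subset)
    then show "F \<in> (sqcup n ^^ 0) A" using \<open>g \<in> A\<close> by simp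
  qed
next
  case (Suc k)
  note IH = Suc.IH
  show ?case
  proof (rule set_eqI, rule iffI)
    fix F assume "F \<in> (sqcup n ^^ Suc k) A"
    then obtain H i where H: "H \<in> (sqcup n ^^k) A" "i \<in> {1..n}" "i \<notin> H" "F = insert i H"
      by (auto simp: sqcup_def)
    then obtain g where g: "g\<in>A" "g\<subseteq>H" "card H = d+k" "H \<subseteq> {1..n}" using IH by auto
    have "finite H" using g finite_subset by blast
    then have "card F = d + Suc k" using H g by simp
    then show "F \<in> {F. F \<subseteq> {1..n} \<and> (\<exists>g\<in>A. g \<subseteq> F) \<and> card F = d + Suc k}" using H g by auto
  next
    fix F assume "F \<in> {F. F \<subseteq> {1..n} \<and> (\<exists>g\<in>A. g \<subseteq> F) \<and> card F = d + Suc k}"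
    then obtain g where g: "g \<in> A" "g \<subseteq> F" "card F = d + Suc k" "F \<subseteq> {1..n}" by auto
    have fF: "finite F" using g finite_subset by blast
    have "F \<noteq> g" using g A by auto
    then obtain i where i: "i \<in> F" "i \<notin> g" using g by blast
    define H where "H = F - {i}"
    have "H \<subseteq> {1..n}" "g \<subseteq> H" "card H = d + k" using i g fF unfolding H_def by auto
    then have "H \<in> (sqcup n ^^k) A" using IH g by auto
    moreover have "F = insert i H" "i \<notin> H" "i \<in> {1..n}" using i g H_def by auto
    ultimately show "F \<in> (sqcup n ^^ Suc k) A"
      by (auto simp: sqcup_def)
  qed
qed


theorem proposition6p1:
  fixes n :: nat and G :: "nat set set"
  assumes "sqfree_min_gens n G"
  shows "f_ideal n G \<longleftrightarrow>
    ((\<forall>l \<in> card ` G. l > 0 \<longrightarrow>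
        real (card (Gdeg G l)) = 1/2 * (real (n choose l)
          - real (card (\<Union>d \<in> {d \<in> card ` G. d > l}. (sqcap ^^ (d - l)) (Gdeg G d)))
          - real (card (\<Union>d \<in> {d \<in> card ` G. d < l}. (sqcup n ^^ (l - d)) (Gdeg G d))))) \<and>
     (\<forall>l::nat. l > 0 \<and> l \<notin> card ` G \<longrightarrow>
        (\<Union>d \<in> {d \<in> card ` G. d > l}. (sqcap ^^ (d - l)) (Gdeg G d))
          = sm n l - (\<Union>d \<in> {d \<in> card ` G. d < l}. (sqcup n ^^ (l - d)) (Gdeg G d))))"
proof -
  have Gsub: "G \<subseteq> Pow {1..n}" and anti: "\<And>g h. g \<in> G \<Longrightarrow> h \<in> G \<Longrightarrow> g \<subseteq> h \<Longrightarrow> g = h"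
    using assms unfolding sqfree_min_gens_def by auto
  have gfin: "\<And>g. g \<in> G \<Longrightarrow> finite g" using Gsub finite_subset by blast
  define Al where "Al l = (\<Union>d \<in> {d \<in> card ` G. d > l}. (sqcap ^^ (d - l)) (Gdeg G d))" for l
  define Bl where "Bl l = (\<Union>d \<in> {d \<in> card ` G. d < l}. (sqcup n ^^ (l - d)) (Gdeg G d))" for l
  have Aeq: "Al l = {F. card F = l \<and> (\<exists>g\<in>G. F \<subset> g)}" if "l > 0" for l
  proof -
    have "(sqcap ^^ (d - l)) (Gdeg G d) = {F. \<exists>g\<in>Gdeg G d. F \<subseteq> g \<and> card F = d - (d - l)}"
      if "d > l" for d
      by (rule cap_iter) (use gfin \<open>l > 0\<close> that in \<open>auto simp: Gdeg_def\<close>)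
    then have "Al l = (\<Union>d \<in> {d \<in> card ` G. d > l}. {F. \<exists>g\<in>Gdeg G d. F \<subseteq> g \<and> card F = l})"
      unfolding Al_def by (auto simp del: diff_diff_cancel)
    also have "\<dots> = {F. card F = l \<and> (\<exists>g\<in>G. F \<subset> g)}"
    proof (rule set_eqI, rule iffI)
      fix F assume "F \<in> (\<Union>d \<in> {d \<in> card ` G. d > l}. {F. \<exists>g\<in>Gdeg G d. F \<subseteq> g \<and> card F = l})"
      then show "F \<in> {F. card F = l \<and> (\<exists>g\<in>G. F \<subset> g)}" by (auto simp: Gdeg_def)
    next
      fix F assume "F \<in> {F. card F = l \<and> (\<exists>g\<in>G. F \<subset> g)}"
      then obtain g where g: "g \<in> G" "F \<subset> g" "card F = l" by auto
      then have "card g > l" using gfin psubset_card_mono by blast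
      then show "F \<in> (\<Union>d \<in> {d \<in> card ` G. d > l}. {F. \<exists>g\<in>Gdeg G d. F \<subseteq> g \<and> card F = l})"
        using g by (auto simp: Gdeg_def)
    qed
    finally show ?thesis .
  qed
  have Beq: "Bl l = {F. F \<subseteq> {1..n} \<and> card F = l \<and> (\<exists>g\<in>G. g \<subset> F)}" for l
  proof -
    have "(sqcup n ^^ (l - d)) (Gdeg G d) = {F. F \<subseteq> {1..n} \<and> (\<exists>g\<in>Gdeg G d. g \<subseteq> F) \<and> card F = d + (l - d)}"
      if "d < l" for d
      by (rule cup_iter) (use Gsub in \<open>auto simp: Gdeg_def\<close>)
    then have "Bl l = (\<Union>d \<in> {d \<in> card ` G. d < l}. {F. F \<subseteq> {1..n} \<and> (\<exists>g\<in>Gdeg G d. g \<subseteq> F) \<and> card F = l})"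
      unfolding Bl_def by auto
    also have "\<dots> = {F. F \<subseteq> {1..n} \<and> card F = l \<and> (\<exists>g\<in>G. g \<subset> F)}"
    proof (rule set_eqI, rule iffI)
      fix F assume "F \<in> (\<Union>d \<in> {d \<in> card ` G. d < l}. {F. F \<subseteq> {1..n} \<and> (\<exists>g\<in>Gdeg G d. g \<subseteq> F) \<and> card F = l})"
      then obtain g where "g \<in> G" "g \<subseteq> F" "card g < l" "card F = l" "F \<subseteq> {1..n}" by (auto simp: Gdeg_def)
      then show "F \<in> {F. F \<subseteq> {1..n} \<and> card F = l \<and> (\<exists>g\<in>G. g \<subset> F)}" by auto
    next
      fix F assume "F \<in> {F. F \<subseteq> {1..n} \<and> card F = l \<and> (\<exists>g\<in>G. g \<subset> F)}"
      then obtain g where g: "g \<in> G" "g \<subset> F" "card F = l" "F \<subseteq> {1..n}" by auto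
      then have "card g < l" using psubset_card_mono finite_subset by (metis finite_atLeastAtMost)
      then show "F \<in> (\<Union>d \<in> {d \<in> card ` G. d < l}. {F. F \<subseteq> {1..n} \<and> (\<exists>g\<in>Gdeg G d. g \<subseteq> F) \<and> card F = l})"
        using g by (auto simp: Gdeg_def)
    qed
    finally show ?thesis .
  qed
  have fins: "finite (sm n l)" for l unfolding sm_def by auto
  have smc: "card (sm n l) = n choose l" for l
    using n_subsets[of "{1..n}" l] unfolding sm_def by simp
  have GA: "Gdeg G l \<inter> Al l = {}" if lp: "l > 0" for l
  proof -
    { fix F assume "F \<in> Gdeg G l" "F \<in> Al l"
      then obtain g where "F \<in> G" "g \<in> G" "F \<subset> g" using Aeq[OF lp] by (auto simp: Gdeg_def)
      then have False using anti by blast }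
    then show ?thesis by blast
  qed
  have GB: "Gdeg G l \<inter> Bl l = {}" for l
  proof -
    { fix F assume "F \<in> Gdeg G l" "F \<in> Bl l"
      then obtain g where "F \<in> G" "g \<in> G" "g \<subset> F" using Beq by (auto simp: Gdeg_def)
      then have False using anti by blast }
    then show ?thesis by blast
  qed
  have AB: "Al l \<inter> Bl l = {}" if lp: "l > 0" for l
  proof -
    { fix F assume "F \<in> Al l" "F \<in> Bl l"
      then obtain g h where "g \<in> G" "F \<subset> g" "h \<in> G" "h \<subset> F" using Aeq[OF lp] Beq[of l] by (auto simp only: mem_Collect_eq)
      then have False using anti by blast }
    then show ?thesis by blast
  qed
  have Gsm: "Gdeg G l \<subseteq> sm n l" for l using Gsub by (auto simp: Gdeg_def sm_def)
  have Asm: "Al l \<subseteq> sm n l" if "l > 0" for l using Aeq[OF that] Gsub by (auto simp: sm_def)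
  have Bsm: "Bl l \<subseteq> sm n l" for l using Beq by (auto simp: sm_def)
  have facet: "{F \<in> facet_complex G. card F = l} = Gdeg G l \<union> Al l" if "l > 0" for l
    using Aeq[OF that] by (auto simp: facet_complex_def Gdeg_def)
  have sr: "{F \<in> sr_complex n G. card F = l} = sm n l - (Gdeg G l \<union> Bl l)" for l
    using Beq by (auto simp: sr_complex_def Gdeg_def sm_def)
  define Q where "Q l \<longleftrightarrow> real (card (Gdeg G l)) = 1/2 * (real (n choose l) - real (card (Al l)) - real (card (Bl l)))" for l
  have key: "fvec (facet_complex G) (l - 1) = fvec (sr_complex n G) (l - 1) \<longleftrightarrow> Q l" if "l > 0" for l
  proof -
    have fA: "finite (Al l)" "finite (Bl l)" "finite (Gdeg G l)"
      using Asm[OF that] Bsm Gsm fins finite_subset by metis+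
    have c1: "fvec (facet_complex G) (l - 1) = card (Gdeg G l) + card (Al l)"
      using facet[OF that] that GA[OF that] fA unfolding fvec_def by (simp add: card_Un_disjoint)
    have c2: "card (Gdeg G l \<union> Bl l) = card (Gdeg G l) + card (Bl l)"
      using GB fA by (simp add: card_Un_disjoint)
    have c3: "fvec (sr_complex n G) (l - 1) = (n choose l) - card (Gdeg G l \<union> Bl l)"
      using sr[of l] that unfolding fvec_def
      by (simp add: card_Diff_subset fA Gsm Bsm smc)
    have le: "card (Gdeg G l \<union> Bl l) \<le> n choose l"
      using Gsm Bsm fins smc by (metis card_mono le_sup_iff)
    show ?thesis unfolding c1 c3 Q_def using c2 le by auto
  qed
  have fi: "f_ideal n G \<longleftrightarrow> (\<forall>l>0. Q l)"
  proof
    assume "f_ideal n G"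
    then show "\<forall>l>0. Q l" using key unfolding f_ideal_def by auto
  next
    assume "\<forall>l>0. Q l"
    then have "fvec (facet_complex G) i = fvec (sr_complex n G) i" for i
      using key[of "Suc i"] by auto
    then show "f_ideal n G" unfolding f_ideal_def by auto
  qed
  have q2: "Q l \<longleftrightarrow> Al l = sm n l - Bl l" if "l > 0" "l \<notin> card ` G" for l
  proof -
    have G0: "Gdeg G l = {}" using that by (auto simp: Gdeg_def)
    have sub: "Al l \<subseteq> sm n l - Bl l" using Asm AB that by blast
    have fin2: "finite (sm n l - Bl l)" using fins by auto
    have cd: "card (sm n l - Bl l) = (n choose l) - card (Bl l)"
      using card_Diff_subset[OF finite_subset[OF Bsm fins] Bsm] smc by simp
    have le: "card (Bl l) \<le> n choose l" using Bsm fins smc card_mono by metis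
    have "Q l \<longleftrightarrow> card (Al l) = card (sm n l - Bl l)"
      unfolding Q_def G0 cd using le by auto
    also have "\<dots> \<longleftrightarrow> Al l = sm n l - Bl l"
      using sub fin2 card_subset_eq by metis
    finally show ?thesis .
  qed
  have "(\<forall>l>0. Q l) \<longleftrightarrow> (\<forall>l\<in>card ` G. l > 0 \<longrightarrow> Q l) \<and> (\<forall>l. l > 0 \<and> l \<notin> card ` G \<longrightarrow> Al l = sm n l - Bl l)"
  proof (intro iffI conjI allI impI ballI)
    fix l assume "\<forall>l>0. Q l" "l \<in> card ` G" "l > 0" then show "Q l" by simp
  next
    fix l assume "\<forall>l>0. Q l" "l > 0 \<and> l \<notin> card ` G" then show "Al l = sm n l - Bl l" using q2 by simp
  next
    fix l :: nat assume H: "(\<forall>l\<in>card ` G. l > 0 \<longrightarrow> Q l) \<and> (\<forall>l. l > 0 \<and> l \<notin> card ` G \<longrightarrow> Al l = sm n l - Bl l)" "l > 0"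
    show "Q l"
    proof (cases "l \<in> card ` G")
      case True then show ?thesis using H by blast
    next
      case False then show ?thesis using H q2 by simp
    qed
  qed
  then show ?thesis unfolding fi unfolding Q_def Al_def Bl_def .
qed

end
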